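(* Let $n \ge 2$ and let $T$ be a triangulation of the cyclic polytope $C = C(n+2,3)$, whose vertices are labelled $0,1,\dots,n+1$. Let $\{v,w\} \in F_1(T) \setminus F_1(C)$ be an internal edge with $v < w$. Then there are vertices $a, b, c$ of $C$ with $a < v < b < w < c$ such that $\{\{v,w,a\},\{v,w,b\},\{v,w,c\}\} \subseteq F_2(T)$.
   Context: The cyclic polytope $C(n+2,3)$ is the convex hull of $n+2$ points $\mu_3(t_0),\dots,\mu_3(t_{n+1})$ on the moment curve $\mu_3(t)=(t,t^2,t^3)$ with $t_0<t_1<\dots<t_{n+1}$; its vertices are labelled $0,1,\dots,n+1$ in this order, and faces are identified with their vertex sets. Its edges are $F_1(C)=\{\{0,n+1\},\{0,i\},\{i,n+1\},\{i,i+1\} : 0<i<n+1\}$ and its 2-faces are $F_2(C)=\{\{0,i,i+1\},\{i-1,i,n+1\} : 0<i<n+1\}$. A triangulation of $C$ is a set $T$ of 3-simplices (4-element subsets of $\{0,\dots,n+1\}$) such that the union of their convex hulls is $C$ and any two of them intersect in a common (possibly empty) face. For a triangulation $T$, $F_1(T)$ is the set of 2-element subsets contained in some simplex of $T$, and $F_2(T)$ is the set of 3-element subsets contained in some simplex of $T$. *)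

theory Defs
  imports "HOL-Analysis.Analysis"
begin

definition moment3 :: "real \<Rightarrow> real^3" where
  "moment3 s = vector [s, s^2, s^3]"

definition cyc_hull :: "(nat \<Rightarrow> real) \<Rightarrow> nat set \<Rightarrow> (real^3) set" where
  "cyc_hull t S = convex hull ((\<lambda>i. moment3 (t i)) ` S)"

definition cyclic_polytope :: "nat \<Rightarrow> (nat \<Rightarrow> real) \<Rightarrow> (real^3) set" where
  "cyclic_polytope n t = cyc_hull t {0..n+1}"

definition F1C :: "nat \<Rightarrow> nat set set" where
  "F1C n = {{0, n+1}} \<union> {e. \<exists>i. 0 < i \<and> i < n+1 \<and>
             (e = {0, i} \<or> e = {i, n+1} \<or> e = {i, i+1})}"

definition F2C :: "nat \<Rightarrow> nat set set" where
  "F2C n = {f. \<exists>i. 0 < i \<and> i < n+1 \<and> (f = {0, i, i+1} \<or> f = {i - 1, i, n+1})}"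

definition is_triangulation :: "nat \<Rightarrow> (nat \<Rightarrow> real) \<Rightarrow> nat set set \<Rightarrow> bool" where
  "is_triangulation n t T \<longleftrightarrow>
     (\<forall>S\<in>T. S \<subseteq> {0..n+1} \<and> card S = 4) \<and>
     \<Union>((cyc_hull t) ` T) = cyclic_polytope n t \<and>
     (\<forall>S\<in>T. \<forall>S'\<in>T.
        (cyc_hull t S \<inter> cyc_hull t S') face_of cyc_hull t S \<and>
        (cyc_hull t S \<inter> cyc_hull t S') face_of cyc_hull t S')"

definition F1T :: "nat set set \<Rightarrow> nat set set" where
  "F1T T = {e. card e = 2 \<and> (\<exists>S\<in>T. e \<subseteq> S)}"

definition F2T :: "nat set set \<Rightarrow> nat set set" where
  "F2T T = {f. card f = 3 \<and> (\<exists>S\<in>T. f \<subseteq> S)}"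

end

theory Submission
  imports Defs
begin

definition aff :: "real \<Rightarrow> real \<Rightarrow> real \<Rightarrow> real \<Rightarrow> real^3 \<Rightarrow> real" where
  "aff c0 c1 c2 c3 y = c0 + c1 * y$1 + c2 * y$2 + c3 * y$3"

lemma aff_moment: "aff c0 c1 c2 c3 (moment3 s) = c0 + c1 * s + c2 * s^2 + c3 * s^3"
  by (simp add: aff_def moment3_def)

lemma aff_comb:
  assumes "u + v + w = 1"
  shows "aff c0 c1 c2 c3 (u *\<^sub>R x + v *\<^sub>R y + w *\<^sub>R z) =
    u * aff c0 c1 c2 c3 x + v * aff c0 c1 c2 c3 y + w * aff c0 c1 c2 c3 z"
proof -
  have "c0 = (u+v+w) * c0" using assms by simp
  then show ?thesis by (simp add: aff_def algebra_simps)
qed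

lemma aff_convex_ge: "convex {y. 0 \<le> aff c0 c1 c2 c3 y}"
proof (clarsimp simp: convex_def)
  fix x y :: "real^3" and u v :: real
  assume h: "0 \<le> aff c0 c1 c2 c3 x" "0 \<le> aff c0 c1 c2 c3 y" "0 \<le> u" "0 \<le> v" "u + v = 1"
  have "aff c0 c1 c2 c3 (u *\<^sub>R x + v *\<^sub>R y + 0 *\<^sub>R y) = u * aff c0 c1 c2 c3 x + v * aff c0 c1 c2 c3 y + 0 * aff c0 c1 c2 c3 y"
    by (rule aff_comb) (use h in simp)
  then show "0 \<le> aff c0 c1 c2 c3 (u *\<^sub>R x + v *\<^sub>R y)" using h by simp
qed

lemma aff_convex_gt: "convex {y. 0 < aff c0 c1 c2 c3 y}"
proof (clarsimp simp: convex_def)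
  fix x y :: "real^3" and u v :: real
  assume h: "0 < aff c0 c1 c2 c3 x" "0 < aff c0 c1 c2 c3 y" "0 \<le> u" "0 \<le> v" "u + v = 1"
  have "aff c0 c1 c2 c3 (u *\<^sub>R x + v *\<^sub>R y + 0 *\<^sub>R y) = u * aff c0 c1 c2 c3 x + v * aff c0 c1 c2 c3 y + 0 * aff c0 c1 c2 c3 y"
    by (rule aff_comb) (use h in simp)
  moreover have "0 < u * aff c0 c1 c2 c3 x + v * aff c0 c1 c2 c3 y"
  proof (cases "u = 0")
    case True then show ?thesis using h by simp
  next
    case False then have "0 < u" using h by simp
    then show ?thesis using h by (simp add: add_pos_nonneg)
  qed
  ultimately show "0 < aff c0 c1 c2 c3 (u *\<^sub>R x + v *\<^sub>R y)" by simp
qed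

lemma extreme:
  fixes t :: "nat \<Rightarrow> real"
  assumes inj: "\<And>j. j \<in> S \<Longrightarrow> t j \<noteq> t i"
    and "moment3 (t i) \<in> cyc_hull t S"
  shows False
proof -
  let ?q = "aff ((t i)^2) (-2 * t i) 1 0"
  have "(\<lambda>j. moment3 (t j)) ` S \<subseteq> {y. 0 < ?q y}"
  proof (rule image_subsetI, rule CollectI)
    fix j assume "j \<in> S"
    then have "t j - t i \<noteq> 0" using inj by auto
    then have "0 < (t j - t i)^2" by simp
    then show "0 < ?q (moment3 (t j))" by (simp add: aff_moment power2_eq_square algebra_simps)
  qed
  then have "cyc_hull t S \<subseteq> {y. 0 < ?q y}"
    unfolding cyc_hull_def by (rule hull_minimal) (rule aff_convex_gt)
  moreover have "?q (moment3 (t i)) = 0" by (simp add: aff_moment power2_eq_square)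
  ultimately show False using assms(2) by force
qed

lemma hull_closed:
  assumes "finite S" shows "closed (cyc_hull t S)"
  unfolding cyc_hull_def
  by (intro compact_imp_closed compact_convex_hull finite_imp_compact finite_imageI assms)

lemma moment3_inj: "moment3 a = moment3 b \<Longrightarrow> a = b"
  by (metis moment3_def vector_3(1))

lemma key:
  assumes tri: "is_triangulation n t T" and inj: "inj_on t {0..n+1}"
    and S0: "S0 \<in> T" "v \<in> S0" "w \<in> S0" "v \<noteq> w" and a: "a \<le> n+1"
  shows "\<exists>S\<in>T. v \<in> S \<and> w \<in> S \<and> (\<exists>\<epsilon>>0. \<epsilon> *\<^sub>R moment3 (t a) + ((1-\<epsilon>)/2) *\<^sub>R moment3 (t v)
           + ((1-\<epsilon>)/2) *\<^sub>R moment3 (t w) \<in> cyc_hull t S)"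
proof -
  define P where "P i = moment3 (t i)" for i
  define m where "m = midpoint (P v) (P w)"
  have ST: "S \<subseteq> {0..n+1} \<and> card S = 4" if "S \<in> T" for S
    using tri that unfolding is_triangulation_def by blast
  have finS: "finite S" if "S \<in> T" for S
    using ST[OF that] by (metis card.infinite zero_neq_numeral)
  have finT: "finite T"
    by (rule finite_subset[of T "Pow {0..n+1}"]) (use ST in auto)
  define K where "K = \<Union> (cyc_hull t ` {S\<in>T. m \<notin> cyc_hull t S})"
  have "closed K" unfolding K_def
    by (rule closed_Union) (use finT hull_closed finS in auto)
  moreover have "m \<notin> K" unfolding K_def by auto
  ultimately obtain e where e: "e > 0" "ball m e \<subseteq> - K"
    by (metis ComplI open_Compl open_contains_ball)
  define N where "N = norm (P a - m)"
  define \<epsilon> where "\<epsilon> = min (1/2) (e / (2 * (N + 1)))"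
  have N0: "N \<ge> 0" unfolding N_def by simp
  have eps0: "\<epsilon> > 0" unfolding \<epsilon>_def using e N0 by simp
  have eps1: "\<epsilon> \<le> 1" unfolding \<epsilon>_def by simp
  define p where "p = (1 - \<epsilon>) *\<^sub>R m + \<epsilon> *\<^sub>R P a"
  have "\<epsilon> * (N + 1) \<le> e / (2 * (N + 1)) * (N + 1)"
    unfolding \<epsilon>_def using N0 by (intro mult_right_mono) auto
  also have "\<dots> = e / 2" using N0 by (simp add: field_simps)
  finally have "\<epsilon> * N + \<epsilon> \<le> e / 2" by (simp add: algebra_simps)
  then have "\<epsilon> * N < e" using e eps0 by linarith
  moreover have "dist m p = \<epsilon> * N"
  proof -
    have "m - p = \<epsilon> *\<^sub>R (m - P a)" unfolding p_def by (simp add: algebra_simps)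
    then show ?thesis unfolding dist_norm N_def using eps0 by (simp add: norm_minus_commute)
  qed
  ultimately have "p \<in> ball m e" by simp
  then have pK: "p \<notin> K" using e by auto
  let ?C = "convex hull (P ` {0..n+1})"
  have PC: "P i \<in> ?C" if "i \<le> n+1" for i using that by (intro hull_inc) auto
  have vw: "v \<le> n+1" "w \<le> n+1" using ST[OF S0(1)] S0 by auto
  have "m \<in> ?C" unfolding m_def midpoint_def
    using convexD[OF convex_convex_hull PC[OF vw(1)] PC[OF vw(2)], of "1/2" "1/2"]
    by (simp add: scaleR_add_right)
  then have "p \<in> ?C" unfolding p_def
    using convexD[OF convex_convex_hull _ PC[OF a], of m "1 - \<epsilon>" \<epsilon>] eps0 eps1 by simp
  then have "p \<in> \<Union>((cyc_hull t) ` T)"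
    using tri unfolding is_triangulation_def cyclic_polytope_def cyc_hull_def P_def by simp
  then obtain S where S: "S \<in> T" "p \<in> cyc_hull t S" by auto
  with pK have mS: "m \<in> cyc_hull t S" unfolding K_def by auto
  have face: "(cyc_hull t S0 \<inter> cyc_hull t S) face_of cyc_hull t S0"
    using tri S0(1) S(1) unfolding is_triangulation_def by blast
  have "P v \<noteq> P w" unfolding P_def using inj S0 vw
    by (metis moment3_inj atLeastAtMost_iff inj_on_eq_iff le0)
  then have mo: "m \<in> open_segment (P v) (P w)" unfolding m_def by simp
  have PS0: "P v \<in> cyc_hull t S0" "P w \<in> cyc_hull t S0"
    unfolding cyc_hull_def P_def using S0 by (auto intro: hull_inc)
  have m0: "m \<in> cyc_hull t S0"
    using convexD[OF convex_convex_hull PS0[unfolded cyc_hull_def], of "1/2" "1/2"]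
    unfolding m_def midpoint_def cyc_hull_def by (simp add: scaleR_add_right)
  from face_ofD[OF face mo PS0] mS m0
  have PvS: "P v \<in> cyc_hull t S" "P w \<in> cyc_hull t S" by auto
  have inS: "i \<in> S" if "i \<le> n+1" "P i \<in> cyc_hull t S" for i
  proof (rule ccontr)
    assume "i \<notin> S"
    then have "\<And>j. j \<in> S \<Longrightarrow> t j \<noteq> t i"
      using inj ST[OF S(1)] that(1) by (metis atLeastAtMost_iff inj_on_eq_iff le0 subsetD)
    then show False using extreme that(2) unfolding P_def by blast
  qed
  have "p = \<epsilon> *\<^sub>R P a + ((1-\<epsilon>)/2) *\<^sub>R P v + ((1-\<epsilon>)/2) *\<^sub>R P w"
    unfolding p_def m_def midpoint_def by (simp add: algebra_simps)
  then show ?thesis using S inS[OF vw(1) PvS(1)] inS[OF vw(2) PvS(2)] eps0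
    unfolding P_def by blast
qed

lemma sep:
  assumes "\<epsilon> *\<^sub>R moment3 (t a) + ((1-\<epsilon>)/2) *\<^sub>R moment3 (t v) + ((1-\<epsilon>)/2) *\<^sub>R moment3 (t w) \<in> cyc_hull t S"
    and "\<epsilon> > 0" "aff c0 c1 c2 c3 (moment3 (t v)) = 0" "aff c0 c1 c2 c3 (moment3 (t w)) = 0"
    "aff c0 c1 c2 c3 (moment3 (t a)) < 0" "\<forall>j\<in>S. 0 \<le> aff c0 c1 c2 c3 (moment3 (t j))"
  shows False
proof -
  have "cyc_hull t S \<subseteq> {y. 0 \<le> aff c0 c1 c2 c3 y}"
    unfolding cyc_hull_def by (rule hull_minimal) (use assms(6) aff_convex_ge in auto)
  then have "0 \<le> aff c0 c1 c2 c3 (\<epsilon> *\<^sub>R moment3 (t a) + ((1-\<epsilon>)/2) *\<^sub>R moment3 (t v) + ((1-\<epsilon>)/2) *\<^sub>R moment3 (t w))"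
    using assms(1) by auto
  also have "\<dots> = \<epsilon> * aff c0 c1 c2 c3 (moment3 (t a))"
    by (subst aff_comb) (use assms(3,4) in auto)
  finally show False using mult_pos_neg[OF assms(2,5)] by linarith
qed

theorem lemma4:
  fixes n :: nat and t :: "nat \<Rightarrow> real" and T :: "nat set set" and v w :: nat
  assumes "n \<ge> 2"
    and "strict_mono_on {0..n+1} t"
    and "is_triangulation n t T"
    and "{v, w} \<in> F1T T - F1C n"
    and "v < w"
  shows "\<exists>a b c. a \<le> n+1 \<and> b \<le> n+1 \<and> c \<le> n+1 \<and> a < v \<and> v < b \<and> b < w \<and> w < c \<and>
           {{v, w, a}, {v, w, b}, {v, w, c}} \<subseteq> F2T T"
proof -
  define M where "M = {0..n+1}"
  have inj: "inj_on t {0..n+1}" using assms(2) by (rule strict_mono_on_imp_inj_on)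
  have mono: "t i < t j" if "i \<le> n+1" "j \<le> n+1" "i < j" for i j
    using assms(2) that by (auto intro: strict_mono_onD)
  have monole: "t i \<le> t j" if "i \<le> n+1" "j \<le> n+1" "i \<le> j" for i j
    using mono[OF that(1,2)] that(3) by (cases "i = j") auto
  have tri: "is_triangulation n t T" by fact
  have ST: "S \<subseteq> {0..n+1} \<and> card S = 4" if "S \<in> T" for S
    using tri that unfolding is_triangulation_def by blast
  from assms(4) obtain S0 where S0: "S0 \<in> T" "v \<in> S0" "w \<in> S0"
    unfolding F1T_def by auto
  have nF: "{v, w} \<notin> F1C n" using assms(4) by simp
  have wle: "w \<le> n+1" "v \<le> n+1" using ST[OF S0(1)] S0 by auto
  have v0: "0 < v"
  proof (rule ccontr)
    assume "\<not> 0 < v" then have "v = 0" by simp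
    show False
    proof (cases "w = n+1")
      case True then show ?thesis using nF \<open>v = 0\<close> unfolding F1C_def by auto
    next
      case False then have "0 < w" "w < n+1" using wle assms(5) by auto
      then show ?thesis using nF \<open>v = 0\<close> unfolding F1C_def by auto
    qed
  qed
  have wn: "w < n+1"
  proof (rule ccontr)
    assume "\<not> w < n+1" then have "w = n+1" using wle by simp
    then show False using nF v0 assms(5) unfolding F1C_def by auto
  qed
  have vw1: "v + 1 < w"
  proof (rule ccontr)
    assume "\<not> v + 1 < w" then have "w = v+1" using assms(5) by simp
    have "{v, w} \<in> F1C n" unfolding F1C_def
      by (rule UnI2, rule CollectI, rule exI[of _ v]) (use v0 wn \<open>w = v+1\<close> in auto)
    then show False using nF by simp
  qed
  have F2: "{v, w, x} \<in> F2T T" if "S \<in> T" "v \<in> S" "w \<in> S" "x \<in> S" "x \<noteq> v" "x \<noteq> w" for S x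
    unfolding F2T_def using that assms(5) by auto
  define V where "V = t v"
  define W where "W = t w"
  have VW: "V < W" unfolding V_def W_def using mono wle assms(5) by simp
  obtain S1 e1 where S1: "S1 \<in> T" "v \<in> S1" "w \<in> S1" "e1 > 0"
    "e1 *\<^sub>R moment3 (t 0) + ((1-e1)/2) *\<^sub>R moment3 (t v) + ((1-e1)/2) *\<^sub>R moment3 (t w) \<in> cyc_hull t S1"
    using key[OF tri inj S0 _, of 0] assms(5) by auto
  have "\<exists>x\<in>S1. x < v"
  proof (rule ccontr)
    assume nx: "\<not> (\<exists>x\<in>S1. x < v)"
    have q: "aff (-V*W^2) (2*V*W+W^2) (-(V+2*W)) 1 (moment3 s) = (s - V) * (s - W)^2" for s
      by (simp add: aff_moment power2_eq_square power3_eq_cube algebra_simps)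
    show False
    proof (rule sep[OF S1(5) S1(4)])
      show "aff (-V*W^2) (2*V*W+W^2) (-(V+2*W)) 1 (moment3 (t v)) = 0" by (simp only: q) (simp add: V_def)
      show "aff (-V*W^2) (2*V*W+W^2) (-(V+2*W)) 1 (moment3 (t w)) = 0" by (simp only: q) (simp add: W_def)
      have "t 0 < V" unfolding V_def using mono wle v0 by simp
      then show "aff (-V*W^2) (2*V*W+W^2) (-(V+2*W)) 1 (moment3 (t 0)) < 0"
        unfolding q using VW by (simp add: mult_neg_pos)
      show "\<forall>j\<in>S1. 0 \<le> aff (-V*W^2) (2*V*W+W^2) (-(V+2*W)) 1 (moment3 (t j))"
      proof
        fix j assume "j \<in> S1"
        then have "j \<le> n+1" "v \<le> j" using ST[OF S1(1)] nx by force+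
        then have "V \<le> t j" unfolding V_def using monole wle by simp
        then show "0 \<le> aff (-V*W^2) (2*V*W+W^2) (-(V+2*W)) 1 (moment3 (t j))"
          unfolding q by simp
      qed
    qed
  qed
  then obtain a where a: "a \<in> S1" "a < v" by blast
  obtain S2 e2 where S2: "S2 \<in> T" "v \<in> S2" "w \<in> S2" "e2 > 0"
    "e2 *\<^sub>R moment3 (t (v+1)) + ((1-e2)/2) *\<^sub>R moment3 (t v) + ((1-e2)/2) *\<^sub>R moment3 (t w) \<in> cyc_hull t S2"
    using key[OF tri inj S0 _, of "v+1"] assms(5) wn vw1 by auto
  have "\<exists>x\<in>S2. v < x \<and> x < w"
  proof (rule ccontr)
    assume nx: "\<not> (\<exists>x\<in>S2. v < x \<and> x < w)"
    have q: "aff (V*W) (-(V+W)) 1 0 (moment3 s) = (s - V) * (s - W)" for s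
      by (simp add: aff_moment power2_eq_square algebra_simps)
    show False
    proof (rule sep[OF S2(5) S2(4)])
      show "aff (V*W) (-(V+W)) 1 0 (moment3 (t v)) = 0" by (simp only: q) (simp add: V_def)
      show "aff (V*W) (-(V+W)) 1 0 (moment3 (t w)) = 0" by (simp only: q) (simp add: W_def)
      have "V < t (v+1)" "t (v+1) < W" unfolding V_def W_def using mono wle vw1 wn by simp_all
      then show "aff (V*W) (-(V+W)) 1 0 (moment3 (t (v+1))) < 0"
        unfolding q by (simp add: mult_pos_neg)
      show "\<forall>j\<in>S2. 0 \<le> aff (V*W) (-(V+W)) 1 0 (moment3 (t j))"
      proof
        fix j assume "j \<in> S2"
        then have "j \<le> n+1" "j \<le> v \<or> w \<le> j" using ST[OF S2(1)] nx by force+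
        then have "t j \<le> V \<or> W \<le> t j" unfolding V_def W_def using monole wle by auto
        then show "0 \<le> aff (V*W) (-(V+W)) 1 0 (moment3 (t j))"
          unfolding q using VW by (auto intro: mult_nonpos_nonpos mult_nonneg_nonneg)
      qed
    qed
  qed
  then obtain b where b: "b \<in> S2" "v < b" "b < w" by blast
  obtain S3 e3 where S3: "S3 \<in> T" "v \<in> S3" "w \<in> S3" "e3 > 0"
    "e3 *\<^sub>R moment3 (t (n+1)) + ((1-e3)/2) *\<^sub>R moment3 (t v) + ((1-e3)/2) *\<^sub>R moment3 (t w) \<in> cyc_hull t S3"
    using key[OF tri inj S0 _, of "n+1"] assms(5) by auto
  have "\<exists>x\<in>S3. w < x"
  proof (rule ccontr)
    assume nx: "\<not> (\<exists>x\<in>S3. w < x)"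
    have q: "aff (V^2*W) (-(V^2+2*V*W)) (2*V+W) (-1) (moment3 s) = (s - V)^2 * (W - s)" for s
      by (simp add: aff_moment power2_eq_square power3_eq_cube algebra_simps)
    show False
    proof (rule sep[OF S3(5) S3(4)])
      show "aff (V^2*W) (-(V^2+2*V*W)) (2*V+W) (-1) (moment3 (t v)) = 0" by (simp only: q) (simp add: V_def)
      show "aff (V^2*W) (-(V^2+2*V*W)) (2*V+W) (-1) (moment3 (t w)) = 0" by (simp only: q) (simp add: W_def)
      have "W < t (n+1)" unfolding W_def using mono wle wn by simp
      then show "aff (V^2*W) (-(V^2+2*V*W)) (2*V+W) (-1) (moment3 (t (n+1))) < 0"
        unfolding q using VW by (simp add: mult_pos_neg)
      show "\<forall>j\<in>S3. 0 \<le> aff (V^2*W) (-(V^2+2*V*W)) (2*V+W) (-1) (moment3 (t j))"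
      proof
        fix j assume "j \<in> S3"
        then have "j \<le> n+1" "j \<le> w" using ST[OF S3(1)] nx by force+
        then have "t j \<le> W" unfolding W_def using monole wle by simp
        then show "0 \<le> aff (V^2*W) (-(V^2+2*V*W)) (2*V+W) (-1) (moment3 (t j))"
          unfolding q by simp
      qed
    qed
  qed
  then obtain c where c: "c \<in> S3" "w < c" by blast
  have "a \<le> n+1" using ST[OF S1(1)] a by auto
  moreover have "b \<le> n+1" using ST[OF S2(1)] b by auto
  moreover have "c \<le> n+1" using ST[OF S3(1)] c by auto
  moreover have "{v, w, a} \<in> F2T T" using F2[OF S1(1-3) a(1)] a assms(5) by simp
  moreover have "{v, w, b} \<in> F2T T" using F2[OF S2(1-3) b(1)] b by simp
  moreover have "{v, w, c} \<in> F2T T" using F2[OF S3(1-3) c(1)] c assms(5) by simp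
  ultimately show ?thesis using a b c by blast
qed

end
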